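(* The size $z_{77sr}$ of the self-referencing LZ77 factorization satisfies, for each edit type $\ast\in\{\mathrm{sub},\mathrm{ins},\mathrm{del}\}$: $\mathsf{MS}_{\ast}(z_{77sr},n)\le 2$ and $\mathsf{AS}_{\ast}(z_{77sr},n)\le z_{77sr}$, i.e. $z_{77sr}(T')\le 2z_{77sr}(T)$ for every string $T$ of length $n$ and every $T'$ obtained from $T$ by one edit of that type.
   Context: Strings are over an alphabet $\Sigma$; $\mathsf{ed}$ is the edit distance. $\mathsf{MS}_{\mathrm{sub}}(C,n)=\max_{T\in\Sigma^n}\{C(T')/C(T): T'\in\Sigma^n,\ \mathsf{ed}(T,T')=1\}$, with $\mathsf{MS}_{\mathrm{ins}},\mathsf{MS}_{\mathrm{del}}$ analogous for $T'$ of length $n+1$, resp. $n-1$, and $\mathsf{AS}_\ast$ analogous with $C(T')-C(T)$. The self-referencing LZ77 factorization of $T$ is $T=f_1\cdots f_z$ where for each $1\le i<z$, $f_i[1..|f_i|-1]$ is the longest prefix of $f_i\cdots f_z$ that has an occurrence in $T$ beginning at a position in $[1..|f_1\cdots f_{i-1}|]$ (the occurrence may overlap $f_i$), i.e. $f_i$ is one character longer than that; $f_z$ is the remaining suffix; $z_{77sr}(T)=z$. *)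

theory Defs
  imports Main
begin

fun ed :: "'a list \<Rightarrow> 'a list \<Rightarrow> nat" where
  "ed [] ys = length ys"
| "ed xs [] = length xs"
| "ed (x # xs) (y # ys) =
     min (min (ed xs (y # ys) + 1) (ed (x # xs) ys + 1))
         (ed xs ys + (if x = y then 0 else 1))"

text \<open>Length of the longest prefix of T[p..] that has an occurrence in T starting at
  some position q < p (the occurrence may overlap position p onwards).\<close>
definition lz_len :: "'a list \<Rightarrow> nat \<Rightarrow> nat" where
  "lz_len T p = (GREATEST l. l \<le> length T - p \<and>
      (l = 0 \<or> (\<exists>q<p. take l (drop q T) = take l (drop p T))))"

text \<open>Number of phrases of the self-referencing LZ77 factorization of the suffix of T
  starting at position p: the phrase starting at p has length lz_len T p + 1,
  unless it is the last phrase (remaining suffix).\<close>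
function lz_count :: "'a list \<Rightarrow> nat \<Rightarrow> nat" where
  "lz_count T p = (if length T \<le> p then 0 else Suc (lz_count T (p + lz_len T p + 1)))"
  by pat_completeness auto
termination
  by (relation "measure (\<lambda>(T, p). length T - p)") auto

definition z77sr :: "'a list \<Rightarrow> nat" where
  "z77sr T = lz_count T 0"

end

theory Submission
  imports Defs
begin


definition nxt :: "'a list \<Rightarrow> nat \<Rightarrow> nat" where
  "nxt W p = p + lz_len W p + 1"

definition st :: "'a list \<Rightarrow> nat \<Rightarrow> nat" where
  "st W j = (nxt W ^^ j) 0"

definition SS :: "'a list \<Rightarrow> nat set" where
  "SS W = {st W j | j. st W j < length W}"

definition cnt :: "'a list \<Rightarrow> nat \<Rightarrow> nat \<Rightarrow> nat" where
  "cnt W a b = card (SS W \<inter> {a..<b})"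

definition good :: "'a list \<Rightarrow> nat \<Rightarrow> nat \<Rightarrow> bool" where
  "good W a b \<longleftrightarrow> b \<le> length W + 1 \<and>
     (b \<le> Suc a \<or> (\<exists>q<a. \<forall>t. a + t + 1 < b \<longrightarrow> W!(q+t) = W!(a+t)))"

lemma lz_len_P: "lz_len W s \<le> length W - s \<and>
   (lz_len W s = 0 \<or> (\<exists>q<s. take (lz_len W s) (drop q W) = take (lz_len W s) (drop s W)))"
  unfolding lz_len_def
  by (rule GreatestI_nat[where k=0 and b="length W - s"]) auto

lemma lz_len_le: "lz_len W s \<le> length W - s"
  using lz_len_P by blast

lemma lz_len_copy:
  assumes "lz_len W s > 0"
  shows "\<exists>q<s. \<forall>t<lz_len W s. W!(q+t) = W!(s+t)"
proof -
  let ?l = "lz_len W s"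
  obtain q where q: "q < s" "take ?l (drop q W) = take ?l (drop s W)"
    using lz_len_P[of W s] assms by auto
  have sl: "s + ?l \<le> length W" using lz_len_le[of W s] assms by linarith
  have "\<forall>t<?l. W!(q+t) = W!(s+t)"
  proof (intro allI impI)
    fix t assume t: "t < ?l"
    have "take ?l (drop q W) ! t = take ?l (drop s W) ! t" using q by simp
    moreover have "q \<le> length W" "s \<le> length W" using sl q by linarith+
    ultimately show "W!(q+t) = W!(s+t)" using t by (simp add: nth_take nth_drop)
  qed
  then show ?thesis using q by blast
qed

lemma lz_len_0[simp]: "lz_len W 0 = 0"
  using lz_len_P[of W 0] by auto

lemma good_jump:
  assumes g: "good W a b" and x: "a \<le> x" "x < b"
  shows "b \<le> nxt W x"
proof (cases "b \<le> Suc a")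
  case True then show ?thesis using x by (simp add: nxt_def)
next
  case False
  then obtain q where q: "q < a" "\<forall>t. a + t + 1 < b \<longrightarrow> W!(q+t) = W!(a+t)"
    and bl: "b \<le> length W + 1" using g unfolding good_def by auto
  define L where "L = b - 1 - x"
  define q' where "q' = q + (x - a)"
  have q'x: "q' < x" using q x unfolding q'_def by linarith
  have Lle: "L \<le> length W - x" using bl x unfolding L_def by linarith
  have eq: "take L (drop q' W) = take L (drop x W)"
  proof (rule nth_equalityI)
    show "length (take L (drop q' W)) = length (take L (drop x W))"
      using Lle q'x by simp
  next
    fix t assume "t < length (take L (drop q' W))"
    then have t: "t < L" by simp
    have "a + (x - a + t) + 1 < b" using t x unfolding L_def by linarith
    then have "W!(q + (x - a + t)) = W!(a + (x - a + t))"
      using q(2) by blast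
    then have "W!(q'+t) = W!(x+t)" using x unfolding q'_def
      by (simp add: add.assoc)
    then show "take L (drop q' W) ! t = take L (drop x W) ! t"
      using t Lle q'x by simp
  qed
  have "L \<le> lz_len W x" unfolding lz_len_def
    by (rule Greatest_le_nat[where b="length W - x"]) (use Lle eq q'x in auto)
  then show ?thesis unfolding nxt_def L_def by linarith
qed

lemma nxt_gt: "p < nxt W p" by (simp add: nxt_def)

lemma st_Suc: "st W (Suc j) = nxt W (st W j)"
  by (simp add: st_def)

lemma st_mono: "strict_mono (st W)"
  unfolding strict_mono_Suc_iff by (simp add: st_Suc nxt_gt)

lemma SS_sub: "SS W \<subseteq> {..<length W}"
  unfolding SS_def by auto

lemma finite_SS: "finite (SS W)"
  using SS_sub finite_subset by blast

lemma cnt_good: assumes "good W a b" shows "cnt W a b \<le> 1"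
proof -
  have "\<forall>x\<in>SS W \<inter> {a..<b}. \<forall>y\<in>SS W \<inter> {a..<b}. x = y"
  proof (intro ballI, rule ccontr)
    fix x y assume xA: "x \<in> SS W \<inter> {a..<b}" and yA: "y \<in> SS W \<inter> {a..<b}" and "x \<noteq> y"
    have key: "False" if uv: "u \<in> SS W \<inter> {a..<b}" "v \<in> SS W \<inter> {a..<b}" "u < v" for u v
    proof -
      obtain j k where j: "u = st W j" and k: "v = st W k"
        using uv unfolding SS_def by auto
      have "j < k" using uv j k st_mono[of W] by (metis not_less_iff_gr_or_eq strict_mono_less)
      then have "st W (Suc j) \<le> st W k" using st_mono[of W] by (simp add: strict_mono_less_eq)
      moreover have "b \<le> nxt W u" using good_jump[OF assms] uv by auto
      ultimately show False using uv j k by (simp add: st_Suc)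
    qed
    show False using key[OF xA yA] key[OF yA xA] \<open>x \<noteq> y\<close> by linarith
  qed
  then show ?thesis unfolding cnt_def
    using card_le_Suc0_iff_eq[of "SS W \<inter> {a..<b}"] finite_SS by auto
qed

lemma cnt_split: "cnt W a c \<le> cnt W a b + cnt W b c"
proof -
  have "SS W \<inter> {a..<c} \<subseteq> (SS W \<inter> {a..<b}) \<union> (SS W \<inter> {b..<c})" by auto
  then have "card (SS W \<inter> {a..<c}) \<le> card ((SS W \<inter> {a..<b}) \<union> (SS W \<inter> {b..<c}))"
    by (intro card_mono) (auto intro: finite_subset[OF _ finite_SS])
  also have "\<dots> \<le> card (SS W \<inter> {a..<b}) + card (SS W \<inter> {b..<c})" by (rule card_Un_le)
  finally show ?thesis unfolding cnt_def .
qed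

lemma cnt_le: "cnt W a b \<le> b - a"
  unfolding cnt_def by (metis card_atLeastLessThan card_mono finite_atLeastLessThan inf_le2)

lemma cnt_total: "card (SS W) = cnt W 0 (length W)"
  unfolding cnt_def using SS_sub by (metis atLeast0LessThan inf.absorb1)

declare lz_count.simps[simp del]

lemma lz_count_card:
  "lz_count W p = card {(nxt W ^^ j) p | j. (nxt W ^^ j) p < length W}"
proof (induction W p rule: lz_count.induct)
  case (1 T p)
  have ge: "p \<le> (nxt T ^^ j) p" for j
    by (induction j) (auto intro: less_imp_le order_trans nxt_gt)
  show ?case
  proof (cases "length T \<le> p")
    case True
    then have "{(nxt T ^^ j) p | j. (nxt T ^^ j) p < length T} = {}"
      using ge by (auto simp: not_less intro: order_trans)
    then show ?thesis using True by (subst lz_count.simps) simp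
  next
    case False
    let ?A = "{(nxt T ^^ j) (nxt T p) | j. (nxt T ^^ j) (nxt T p) < length T}"
    have IH: "lz_count T (nxt T p) = card ?A" using 1 False unfolding nxt_def by simp
    have eq: "{(nxt T ^^ j) p | j. (nxt T ^^ j) p < length T} = insert p ?A"
    proof (rule set_eqI, rule iffI)
      fix x assume "x \<in> {(nxt T ^^ j) p | j. (nxt T ^^ j) p < length T}"
      then obtain j where j: "x = (nxt T ^^ j) p" "(nxt T ^^ j) p < length T" by auto
      show "x \<in> insert p ?A"
      proof (cases j)
        case 0 then show ?thesis using j by simp
      next
        case (Suc j') then show ?thesis using j by (auto simp: funpow_Suc_right simp del: funpow.simps)
      qed
    next
      fix x assume "x \<in> insert p ?A"
      then show "x \<in> {(nxt T ^^ j) p | j. (nxt T ^^ j) p < length T}"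
      proof
        assume "x = p" then show ?thesis using False
          by (auto intro!: exI[of _ 0])
      next
        assume "x \<in> ?A"
        then obtain j where "x = (nxt T ^^ j) (nxt T p)" "(nxt T ^^ j) (nxt T p) < length T" by auto
        then show ?thesis
          by (auto intro!: exI[of _ "Suc j"] simp: funpow_Suc_right simp del: funpow.simps)
      qed
    qed
    have pA: "p \<notin> ?A"
    proof
      assume "p \<in> ?A"
      then obtain j where "p = (nxt T ^^ j) (nxt T p)" by auto
      moreover have "nxt T p \<le> (nxt T ^^ j) (nxt T p)"
        by (induction j) (auto intro: less_imp_le order_trans nxt_gt)
      ultimately show False using nxt_gt[of p T] by linarith
    qed
    have fin: "finite ?A" by (rule finite_subset[of _ "{..<length T}"]) auto
    have "lz_count T p = Suc (lz_count T (nxt T p))"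
      using False unfolding nxt_def by (subst lz_count.simps) simp
    then show ?thesis using eq pA fin IH by simp
  qed
qed

lemma z77sr_card: "z77sr W = card (SS W)"
  unfolding z77sr_def lz_count_card SS_def st_def by simp



lemma ed_refl: "ed xs xs = 0"
  by (induction xs) auto

lemma ed_len1: "length xs - length ys \<le> ed xs ys"
  by (induction xs ys rule: ed.induct) auto

lemma ed_len2: "length ys - length xs \<le> ed xs ys"
  by (induction xs ys rule: ed.induct) auto

lemma ed_0: "ed xs ys = 0 \<Longrightarrow> xs = ys"
  by (induction xs ys rule: ed.induct) (auto split: if_splits)

lemma ed_1: "ed xs ys \<le> 1 \<Longrightarrow> xs = ys \<or> (\<exists>u v a b. xs = u@a#v \<and> ys = u@b#v)
   \<or> (\<exists>u v b. xs = u@v \<and> ys = u@b#v) \<or> (\<exists>u v a. xs = u@a#v \<and> ys = u@v)"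
proof (induction xs ys rule: ed.induct)
  case (1 ys)
  then show ?case
    by (cases ys) (auto intro!: exI[of _ "[]"])
next
  case (2 x xs)
  then show ?case by (cases xs) (auto intro!: exI[of _ "[]"])
next
  case (3 x xs y ys)
  consider "ed xs (y#ys) = 0" | "ed (x#xs) ys = 0" | "x = y" "ed xs ys \<le> 1" | "x \<noteq> y" "ed xs ys = 0"
    using "3.prems" by (cases "x = y") (auto simp: min_def split: if_splits)
  then show ?case
  proof cases
    case 1 then have "xs = y#ys" by (rule ed_0)
    then show ?thesis by (metis append_Nil)
  next
    case 2 then have "x#xs = ys" by (rule ed_0)
    then show ?thesis by (metis append_Nil)
  next
    case 3
    then have "xs = ys \<or> (\<exists>u v a b. xs = u@a#v \<and> ys = u@b#v)
   \<or> (\<exists>u v b. xs = u@v \<and> ys = u@b#v) \<or> (\<exists>u v a. xs = u@a#v \<and> ys = u@v)"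
      using "3.IH"(3) by simp
    then show ?thesis using 3
      by (elim disjE exE) (metis Cons_eq_appendI)+
  next
    case 4 then have "xs = ys" using ed_0 by blast
    then show ?thesis by (metis append_Nil)
  qed
qed

lemma ed_sub: "length T' = length T \<Longrightarrow> ed T T' = 1 \<Longrightarrow> \<exists>u v a b. T = u@a#v \<and> T' = u@b#v"
  using ed_1[of T T'] ed_refl[of T] by auto

lemma ed_ins: "length T' = length T + 1 \<Longrightarrow> ed T T' = 1 \<Longrightarrow> \<exists>u v b. T = u@v \<and> T' = u@b#v"
  using ed_1[of T T'] by auto

lemma ed_del: "length T' + 1 = length T \<Longrightarrow> ed T T' = 1 \<Longrightarrow> \<exists>u v a. T = u@a#v \<and> T' = u@v"
  using ed_1[of T T'] by auto



lemma lz_count_ge: "length W \<le> (nxt W ^^ lz_count W p) p"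
proof (induction W p rule: lz_count.induct)
  case (1 T p)
  show ?case
  proof (cases "length T \<le> p")
    case True then show ?thesis by (subst lz_count.simps) simp
  next
    case False
    then have "lz_count T p = Suc (lz_count T (nxt T p))"
      unfolding nxt_def by (subst lz_count.simps) simp
    then show ?thesis using 1 False unfolding nxt_def
      by (simp add: funpow_Suc_right del: funpow.simps)
  qed
qed

lemma st_z: "length T \<le> st T (z77sr T)"
  unfolding st_def z77sr_def by (rule lz_count_ge)

lemma z_pos: "T \<noteq> [] \<Longrightarrow> 1 \<le> z77sr T"
proof -
  assume "T \<noteq> []"
  then have "0 \<in> SS T" unfolding SS_def by (auto intro!: exI[of _ 0] simp: st_def)
  then show ?thesis unfolding z77sr_card using finite_SS
    by (metis One_nat_def Suc_leI card_gt_0_iff empty_iff)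
qed

lemma st_lt: "j < z77sr T \<Longrightarrow> st T j < length T"
proof -
  assume j: "j < z77sr T"
  show ?thesis
  proof (rule ccontr)
    assume nj: "\<not> st T j < length T"
    have a: "length T \<le> st T k" if "j \<le> k" for k
    proof -
      have "st T j \<le> st T k" using st_mono[of T] that by (simp add: strict_mono_less_eq)
      then show ?thesis using nj by linarith
    qed
    have sub: "SS T \<subseteq> st T ` {..<j}"
    proof
      fix x assume "x \<in> SS T"
      then obtain k where k: "x = st T k" "st T k < length T" unfolding SS_def by auto
      have "k < j"
      proof (rule ccontr)
        assume "\<not> k < j"
        then have "length T \<le> st T k" using a by simp
        then show False using k(2) by linarith
      qed
      then show "x \<in> st T ` {..<j}" using k by simp
    qed
    have "card (SS T) \<le> card (st T ` {..<j})" by (rule card_mono[OF _ sub]) simp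
    also have "\<dots> \<le> card {..<j}" by (rule card_image_le) simp
    finally have "card (SS T) \<le> j" by simp
    then show False using j z77sr_card[of T] by simp
  qed
qed

lemma telescope:
  "cnt W (f (st T 0)) (f (st T k)) \<le> (\<Sum>j<k. cnt W (f (st T j)) (f (st T (Suc j))))"
proof (induction k)
  case 0 then show ?case by (simp add: cnt_def)
next
  case (Suc k)
  then show ?case using cnt_split[of W "f (st T 0)" "f (st T (Suc k))" "f (st T k)"] by simp
qed

lemma sum_bound:
  fixes c :: "nat \<Rightarrow> nat"
  assumes "\<forall>j. c j \<le> (if P j then 3 else 2)" "c 0 \<le> (if P 0 then 2 else 1)"
    "\<forall>j j'. P j \<longrightarrow> P j' \<longrightarrow> j = j'"
  shows "1 \<le> k \<Longrightarrow> (\<Sum>j<k. c j) + (if \<exists>j<k. P j then 0 else 1) \<le> 2*k"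
proof (induction k)
  case 0 then show ?case by simp
next
  case (Suc k)
  show ?case
  proof (cases "k = 0")
    case True then show ?thesis using assms(2) by (auto split: if_splits)
  next
    case False
    then have IH: "(\<Sum>j<k. c j) + (if \<exists>j<k. P j then 0 else 1) \<le> 2*k" using Suc by simp
    show ?thesis
    proof (cases "P k")
      case True
      then have n: "\<not> (\<exists>j<k. P j)" using assms(3) by blast
      then have "(if \<exists>j<k. P j then 0 else 1) = (1::nat)" by simp
      then have "(\<Sum>j<k. c j) + 1 \<le> 2*k" using IH by simp
      moreover have "c k \<le> 3" using True assms(1)[rule_format, of k] by simp
      moreover have "\<exists>j<Suc k. P j" using True by blast
      ultimately show ?thesis by simp
    next
      case False
      have "(\<exists>j<Suc k. P j) = (\<exists>j<k. P j)" using False less_Suc_eq by auto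
      then show ?thesis using IH False assms(1)[rule_format, of k] by auto
    qed
  qed
qed

lemma assemble:
  fixes T :: "'a list" and W :: "'a list" and f :: "nat \<Rightarrow> nat"
  assumes ne: "T \<noteq> []"
    and fz: "length W \<le> f (st T (z77sr T))"
    and ph: "\<And>j. j < z77sr T \<Longrightarrow> cnt W (f (st T j)) (f (st T (Suc j))) \<le> (if P j then 3 else 2)"
    and ph0: "cnt W (f (st T 0)) (f (st T 1)) \<le> (if P 0 then 2 else 1)"
    and uniq: "\<forall>j j'. P j \<longrightarrow> P j' \<longrightarrow> j = j'"
    and c0: "cnt W 0 (f 0) \<le> (if \<exists>j<z77sr T. P j then 0 else 1)"
  shows "z77sr W \<le> 2 * z77sr T"
proof -
  let ?z = "z77sr T"
  define c where "c j = (if j < ?z then cnt W (f (st T j)) (f (st T (Suc j))) else 0)" for j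
  have z1: "1 \<le> ?z" using z_pos[OF ne] .
  have s0: "st T 0 = 0" by (simp add: st_def)
  have A1: "\<forall>j. c j \<le> (if P j then 3 else 2)"
  proof
    fix j show "c j \<le> (if P j then 3 else 2)"
    proof (cases "j < ?z")
      case True then show ?thesis using ph[OF True] unfolding c_def by simp
    next
      case False then show ?thesis unfolding c_def by simp
    qed
  qed
  have A2: "c 0 \<le> (if P 0 then 2 else 1)" using ph0 z1 unfolding c_def by simp
  have B: "(\<Sum>j<?z. c j) + (if \<exists>j<?z. P j then 0 else 1) \<le> 2*?z"
    by (rule sum_bound[OF A1 A2 uniq z1])
  have C: "(\<Sum>j<?z. c j) = (\<Sum>j<?z. cnt W (f (st T j)) (f (st T (Suc j))))"
    by (rule sum.cong) (simp_all add: c_def)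
  have D: "z77sr W = cnt W 0 (length W)" using z77sr_card[of W] cnt_total[of W] by simp
  have E: "cnt W 0 (length W) \<le> cnt W 0 (f 0) + cnt W (f 0) (length W)" by (rule cnt_split)
  have F: "cnt W (f 0) (length W) \<le> cnt W (f 0) (f (st T ?z)) + cnt W (f (st T ?z)) (length W)"
    by (rule cnt_split)
  have G: "cnt W (f (st T ?z)) (length W) = 0" using cnt_le[of W "f (st T ?z)" "length W"] fz by simp
  have H: "cnt W (f 0) (f (st T ?z)) \<le> (\<Sum>j<?z. cnt W (f (st T j)) (f (st T (Suc j))))"
    using telescope[of W f T ?z] s0 by simp
  have "z77sr W \<le> cnt W 0 (f 0) + (\<Sum>j<?z. c j)" using D E F G H C by linarith
  then show ?thesis using B c0 by (cases "\<exists>j<?z. P j") simp_all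
qed



lemma goodI:
  assumes "b \<le> length W + 1" "q < a" "\<And>t. a + t + 1 < b \<Longrightarrow> W!(q+t) = W!(a+t)"
  shows "good W a b"
  using assms unfolding good_def by blast

lemma cnt_triv: "b \<le> Suc a \<Longrightarrow> cnt W a b \<le> 1"
  using cnt_le[of W a b] by linarith

lemma cnt3: "cnt W a d \<le> cnt W a b + cnt W b c + cnt W c d"
  using cnt_split[of W a d b] cnt_split[of W b d c] by linarith

lemma copy_form:
  assumes "lz_len T s > 0"
  obtains q where "q < s" "\<And>a b. q \<le> a \<Longrightarrow> a < q + lz_len T s \<Longrightarrow> b = a + (s - q) \<Longrightarrow> T!a = T!b"
proof -
  obtain q where q: "q < s" "\<forall>t<lz_len T s. T!(q+t) = T!(s+t)" using lz_len_copy[OF assms] by blast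
  have "T!a = T!b" if "q \<le> a" "a < q + lz_len T s" "b = a + (s - q)" for a b
  proof -
    have "a - q < lz_len T s" using that by linarith
    then have "T!(q + (a - q)) = T!(s + (a - q))" using q(2) by blast
    moreover have "q + (a - q) = a" "s + (a - q) = b" using that q(1) by linarith+
    ultimately show ?thesis by simp
  qed
  then show ?thesis using that q(1) by blast
qed

lemma phrase_sub:
  assumes len: "length T' = length T" and hT: "\<And>x. x \<noteq> i \<Longrightarrow> T'!x = T!x"
    and s: "s < length T"
  shows "cnt T' s (nxt T s) \<le> (if s \<le> i \<and> i < nxt T s then 3 else 2)"
proof -
  let ?l = "lz_len T s"
  have e: "nxt T s = s + ?l + 1" by (simp add: nxt_def)
  have el: "s + ?l + 1 \<le> length T' + 1" using lz_len_le[of T s] s len by linarith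
  show ?thesis
  proof (cases "?l = 0")
    case True then show ?thesis using cnt_triv[of "nxt T s" s T'] e by auto
  next
    case False
    then obtain q where q: "q < s"
      and cp: "\<And>a b. q \<le> a \<Longrightarrow> a < q + ?l \<Longrightarrow> b = a + (s - q) \<Longrightarrow> T!a = T!b"
      using copy_form[of T s] by blast
    define p where "p = s - q"
    have p1: "1 \<le> p" "s = q + p" using q unfolding p_def by linarith+
    show ?thesis
    proof (cases "s \<le> i \<and> i < nxt T s")
      case P: True
      show ?thesis
      proof (cases "i = s + ?l")
        case True
        have "good T' s (nxt T s)"
        proof (rule goodI[where q=q])
          fix t assume t: "s + t + 1 < nxt T s"
          have "T'!(q+t) = T!(q+t)" using t e True q by (intro hT) linarith
          also have "\<dots> = T!(s+t)" using t e q by (intro cp) (linarith, linarith, simp add: p1)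
          also have "\<dots> = T'!(s+t)" using t e True by (intro hT[symmetric]) linarith
          finally show "T'!(q+t) = T'!(s+t)" .
        qed (use el e q in auto)
        then show ?thesis using cnt_good P by fastforce
      next
        case False
        then have il: "i < s + ?l" using P e by linarith
        define m where "m = min (i + p + 1) (s + ?l + 1)"
        have g1: "good T' s (i+1)"
        proof (cases "i = s")
          case True then show ?thesis using el e P unfolding good_def by auto
        next
          case False
          show ?thesis
          proof (rule goodI[where q=q])
            fix t assume t: "s + t + 1 < i + 1"
            have "T'!(q+t) = T!(q+t)" using t P q by (intro hT) linarith
            also have "\<dots> = T!(s+t)" using t il q by (intro cp) (linarith, linarith, simp add: p1)
            also have "\<dots> = T'!(s+t)" using t by (intro hT[symmetric]) linarith
            finally show "T'!(q+t) = T'!(s+t)" .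
          qed (use el il q P False in auto)
        qed
        have g2: "good T' (i+1) m"
        proof (rule goodI[where q="i+1-p"])
          fix t assume t: "i + 1 + t + 1 < m"
          have "T'!(i+1-p+t) = T!(i+1-p+t)" using t p1 P unfolding m_def by (intro hT) linarith
          also have "\<dots> = T!(i+1+t)" using t p1 P unfolding m_def by (intro cp) linarith+
          also have "\<dots> = T'!(i+1+t)" using t by (intro hT[symmetric]) linarith
          finally show "T'!(i+1-p+t) = T'!(i+1+t)" .
        qed (use el p1 P in \<open>auto simp: m_def\<close>)
        have g3: "good T' m (s + ?l + 1)"
        proof (cases "s + ?l + 1 \<le> i + p + 1")
          case True then show ?thesis using el unfolding good_def m_def by auto
        next
          case False
          then have m: "m = i + p + 1" unfolding m_def by simp
          show ?thesis
          proof (rule goodI[where q="i+1"])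
            fix t assume t: "m + t + 1 < s + ?l + 1"
            have "T'!(i+1+t) = T!(i+1+t)" by (intro hT) linarith
            also have "\<dots> = T!(m+t)" using t p1 P m by (intro cp) linarith+
            also have "\<dots> = T'!(m+t)" using t m by (intro hT[symmetric]) linarith
            finally show "T'!(i+1+t) = T'!(m+t)" .
          qed (use el p1 m in auto)
        qed
        have "cnt T' s (nxt T s) \<le> cnt T' s (i+1) + cnt T' (i+1) m + cnt T' m (nxt T s)" by (rule cnt3)
        then show ?thesis using cnt_good[OF g1] cnt_good[OF g2] cnt_good[OF g3] e P by simp
      qed
    next
      case NP: False
      show ?thesis
      proof (cases "q \<le> i \<and> i < q + ?l")
        case True
        define d where "d = i - q"
        have iS: "i < s" using NP True e p1 by linarith
        have g1: "good T' s (s+d+1)"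
        proof (rule goodI[where q=q])
          fix t assume t: "s + t + 1 < s + d + 1"
          have "T'!(q+t) = T!(q+t)" using t True unfolding d_def by (intro hT) linarith
          also have "\<dots> = T!(s+t)" using t True q unfolding d_def by (intro cp) (linarith, linarith, simp add: p1)
          also have "\<dots> = T'!(s+t)" using iS by (intro hT[symmetric]) linarith
          finally show "T'!(q+t) = T'!(s+t)" .
        qed (use el q True iS in \<open>auto simp: d_def\<close>)
        have g2: "good T' (s+d+1) (s + ?l + 1)"
        proof (rule goodI[where q="i+1"])
          fix t assume t: "s + d + 1 + t + 1 < s + ?l + 1"
          have "T'!(i+1+t) = T!(i+1+t)" by (intro hT) linarith
          also have "\<dots> = T!(s+d+1+t)" using t True p1 unfolding d_def by (intro cp) linarith+
          also have "\<dots> = T'!(s+d+1+t)" using iS by (intro hT[symmetric]) linarith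
          finally show "T'!(i+1+t) = T'!(s+d+1+t)" .
        qed (use el iS in \<open>auto simp: d_def\<close>)
        have "cnt T' s (nxt T s) \<le> cnt T' s (s+d+1) + cnt T' (s+d+1) (nxt T s)" by (rule cnt_split)
        then show ?thesis using cnt_good[OF g1] cnt_good[OF g2] e NP by simp
      next
        case False
        have "good T' s (nxt T s)"
        proof (rule goodI[where q=q])
          fix t assume t: "s + t + 1 < nxt T s"
          have "T'!(q+t) = T!(q+t)" using t e False by (intro hT) linarith
          also have "\<dots> = T!(s+t)" using t e q by (intro cp) (linarith, linarith, simp add: p1)
          also have "\<dots> = T'!(s+t)" using t e NP by (intro hT[symmetric]) linarith
          finally show "T'!(q+t) = T'!(s+t)" .
        qed (use el e q in auto)
        then have "cnt T' s (nxt T s) \<le> 1" by (rule cnt_good)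
        then show ?thesis using NP by simp
      qed
    qed
  qed
qed



lemma uniq_le: "\<forall>j j'. (st T j \<le> i \<and> i < st T (Suc j)) \<longrightarrow> (st T j' \<le> i \<and> i < st T (Suc j')) \<longrightarrow> j = j'"
proof (intro allI impI, rule ccontr)
  fix j j' assume a: "st T j \<le> i \<and> i < st T (Suc j)" "st T j' \<le> i \<and> i < st T (Suc j')" "j \<noteq> j'"
  have m: "Suc x \<le> y \<Longrightarrow> st T (Suc x) \<le> st T y" for x y using st_mono[of T] strict_mono_less_eq by blast
  show False
  proof (cases "j < j'")
    case True then show False using m[of j j'] a by linarith
  next
    case False then have "j' < j" using a by linarith
    then show False using m[of j' j] a by linarith
  qed
qed

lemma uniq_lt: "\<forall>j j'. (st T j < i \<and> i \<le> st T (Suc j)) \<longrightarrow> (st T j' < i \<and> i \<le> st T (Suc j')) \<longrightarrow> j = j'"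
proof (intro allI impI, rule ccontr)
  fix j j' assume a: "st T j < i \<and> i \<le> st T (Suc j)" "st T j' < i \<and> i \<le> st T (Suc j')" "j \<noteq> j'"
  have m: "Suc x \<le> y \<Longrightarrow> st T (Suc x) \<le> st T y" for x y using st_mono[of T] strict_mono_less_eq by blast
  show False
  proof (cases "j < j'")
    case True then show False using m[of j j'] a by linarith
  next
    case False then have "j' < j" using a by linarith
    then show False using m[of j' j] a by linarith
  qed
qed

lemma st01: "st T 0 = 0" "st T 1 = 1"
  by (simp_all add: st_def nxt_def)

lemma st_Suc0: "st T (Suc 0) = Suc 0"
  by (simp add: st_def nxt_def)

theorem thm_sub:
  assumes ne: "T \<noteq> []" and TT: "T = u @ a # v" "T' = u @ b # v"
  shows "z77sr T' \<le> 2 * z77sr T"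
proof -
  let ?i = "length u"
  have len: "length T' = length T" using TT by simp
  have hT: "T'!x = T!x" if "x \<noteq> ?i" for x
    using TT that by (simp add: nth_append nth_Cons')
  show ?thesis
  proof (rule assemble[where f=id and P="\<lambda>j. st T j \<le> ?i \<and> ?i < st T (Suc j)"])
    show "length T' \<le> id (st T (z77sr T))" using st_z[of T] len by simp
  next
    fix j assume j: "j < z77sr T"
    show "cnt T' (id (st T j)) (id (st T (Suc j))) \<le> (if st T j \<le> ?i \<and> ?i < st T (Suc j) then 3 else 2)"
      using phrase_sub[OF len hT st_lt[OF j]] by (simp add: st_Suc)
  next
    show "cnt T' (id (st T 0)) (id (st T 1)) \<le> (if st T 0 \<le> ?i \<and> ?i < st T (Suc 0) then 2 else 1)"
      using cnt_triv[of 1 0 T'] by (simp add: st01 st_Suc0)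
  next
    show "cnt T' 0 (id 0) \<le> (if \<exists>j<z77sr T. st T j \<le> ?i \<and> ?i < st T (Suc j) then 0 else 1)"
      by (simp add: cnt_def)
  qed (rule ne, rule uniq_le)
qed



lemma phrase_ins:
  assumes len: "length T' = length T + 1"
    and hT1: "\<And>x. x < i \<Longrightarrow> T'!x = T!x" and hT2: "\<And>x. i \<le> x \<Longrightarrow> T'!(Suc x) = T!x"
    and s: "s < length T"
  shows "cnt T' (if s < i then s else Suc s) (if nxt T s < i then nxt T s else Suc (nxt T s))
          \<le> (if s < i \<and> i \<le> nxt T s then 3 else 2)"
proof -
  let ?l = "lz_len T s"
  have e: "nxt T s = s + ?l + 1" by (simp add: nxt_def)
  have el: "s + ?l + 1 \<le> length T + 1" using lz_len_le[of T s] s by linarith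
  show ?thesis
  proof (cases "?l = 0")
    case True
    show ?thesis
      using cnt_le[of T' "(if s < i then s else Suc s)" "(if nxt T s < i then nxt T s else Suc (nxt T s))"]
        e True by (auto split: if_splits)
  next
    case False
    then obtain q where q: "q < s"
      and cp: "\<And>a b. q \<le> a \<Longrightarrow> a < q + ?l \<Longrightarrow> b = a + (s - q) \<Longrightarrow> T!a = T!b"
      using copy_form[of T s] by blast
    define p where "p = s - q"
    have p1: "1 \<le> p" "s = q + p" using q unfolding p_def by linarith+
    show ?thesis
    proof (cases "s < i \<and> i \<le> nxt T s")
      case P: True
      then have gs: "(if s < i then s else Suc s) = s"
        and ge: "(if nxt T s < i then nxt T s else Suc (nxt T s)) = s + ?l + 2" using e by auto
      show ?thesis
      proof (cases "i = s + ?l + 1")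
        case True
        have "good T' s (s + ?l + 1)"
        proof (rule goodI[where q=q])
          fix t assume t: "s + t + 1 < s + ?l + 1"
          have "T'!(q+t) = T!(q+t)" using t True q by (intro hT1) linarith
          also have "\<dots> = T!(s+t)" using t q by (intro cp) (linarith, linarith, simp add: p1)
          also have "\<dots> = T'!(s+t)" using t True by (intro hT1[symmetric]) linarith
          finally show "T'!(q+t) = T'!(s+t)" .
        qed (use el len q in auto)
        moreover have "cnt T' (s + ?l + 1) (s + ?l + 2) \<le> 1" by (rule cnt_triv) simp
        moreover have "cnt T' s (s + ?l + 2) \<le> cnt T' s (s + ?l + 1) + cnt T' (s + ?l + 1) (s + ?l + 2)"
          by (rule cnt_split)
        ultimately show ?thesis using cnt_good[of T' s "s + ?l + 1"] gs ge P by simp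
      next
        case False
        then have il: "i \<le> s + ?l" using P e by linarith
        define m where "m = min (i + 1 + p) (s + ?l + 2)"
        have g1: "good T' s (i+1)"
        proof (rule goodI[where q=q])
          fix t assume t: "s + t + 1 < i + 1"
          have "T'!(q+t) = T!(q+t)" using t P q by (intro hT1) linarith
          also have "\<dots> = T!(s+t)" using t il q by (intro cp) (linarith, linarith, simp add: p1)
          also have "\<dots> = T'!(s+t)" using t by (intro hT1[symmetric]) linarith
          finally show "T'!(q+t) = T'!(s+t)" .
        qed (use el len il q in auto)
        have g2: "good T' (i+1) m"
        proof (rule goodI[where q="i-p"])
          fix t assume t: "i + 1 + t + 1 < m"
          have "T'!(i-p+t) = T!(i-p+t)" using t p1 P unfolding m_def by (intro hT1) linarith
          also have "\<dots> = T!(i+t)" using t p1 P unfolding m_def by (intro cp) linarith+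
          also have "\<dots> = T'!(Suc (i+t))" by (intro hT2[symmetric]) linarith
          finally show "T'!(i-p+t) = T'!(i+1+t)" by simp
        qed (use el len p1 P in \<open>auto simp: m_def\<close>)
        have g3: "good T' m (s + ?l + 2)"
        proof (cases "s + ?l + 2 \<le> i + 1 + p")
          case True then show ?thesis using el len unfolding good_def m_def by auto
        next
          case False
          then have m: "m = i + 1 + p" unfolding m_def by simp
          show ?thesis
          proof (rule goodI[where q="i+1"])
            fix t assume t: "m + t + 1 < s + ?l + 2"
            have "T'!(Suc (i+t)) = T!(i+t)" by (intro hT2) linarith
            also have "\<dots> = T!(i+p+t)" using t p1 P m by (intro cp) linarith+
            also have "\<dots> = T'!(Suc (i+p+t))" by (intro hT2[symmetric]) linarith
            finally show "T'!(i+1+t) = T'!(m+t)" using m by simp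
          qed (use el len p1 m in auto)
        qed
        have "cnt T' s (s + ?l + 2) \<le> cnt T' s (i+1) + cnt T' (i+1) m + cnt T' m (s + ?l + 2)" by (rule cnt3)
        then show ?thesis using cnt_good[OF g1] cnt_good[OF g2] cnt_good[OF g3] gs ge P by simp
      qed
    next
      case NP: False
      show ?thesis
      proof (cases "nxt T s < i")
        case True
        then have gs: "(if s < i then s else Suc s) = s"
          and ge: "(if nxt T s < i then nxt T s else Suc (nxt T s)) = s + ?l + 1" using e by auto
        have "good T' s (s + ?l + 1)"
        proof (rule goodI[where q=q])
          fix t assume t: "s + t + 1 < s + ?l + 1"
          have "T'!(q+t) = T!(q+t)" using t True q e by (intro hT1) linarith
          also have "\<dots> = T!(s+t)" using t q by (intro cp) (linarith, linarith, simp add: p1)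
          also have "\<dots> = T'!(s+t)" using t True e by (intro hT1[symmetric]) linarith
          finally show "T'!(q+t) = T'!(s+t)" .
        qed (use el len q in auto)
        then have "cnt T' s (s + ?l + 1) \<le> 1" by (rule cnt_good)
        then show ?thesis using gs ge NP by simp
      next
        case False
        then have iS: "i \<le> s" using NP by linarith
        then have gs: "(if s < i then s else Suc s) = s + 1"
          and ge: "(if nxt T s < i then nxt T s else Suc (nxt T s)) = s + ?l + 2" using e by auto
        have "cnt T' (s+1) (s + ?l + 2) \<le> 2"
        proof (cases "q < i \<and> i < q + ?l")
          case True
          define d where "d = i - q"
          have g1: "good T' (s+1) (s+1+d)"
          proof (rule goodI[where q=q])
            fix t assume t: "s + 1 + t + 1 < s + 1 + d"
            have "T'!(q+t) = T!(q+t)" using t True unfolding d_def by (intro hT1) linarith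
            also have "\<dots> = T!(s+t)" using t True q unfolding d_def by (intro cp) (linarith, linarith, simp add: p1)
            also have "\<dots> = T'!(Suc (s+t))" using iS by (intro hT2[symmetric]) linarith
            finally show "T'!(q+t) = T'!(s+1+t)" by simp
          qed (use el len q True iS in \<open>auto simp: d_def\<close>)
          have g2: "good T' (s+1+d) (s + ?l + 2)"
          proof (rule goodI[where q="i+1"])
            fix t assume t: "s + 1 + d + t + 1 < s + ?l + 2"
            have "T'!(Suc (i+t)) = T!(i+t)" by (intro hT2) linarith
            also have "\<dots> = T!(s+d+t)" using t True p1 unfolding d_def by (intro cp) linarith+
            also have "\<dots> = T'!(Suc (s+d+t))" using iS by (intro hT2[symmetric]) linarith
            finally show "T'!(i+1+t) = T'!(s+1+d+t)" by simp
          qed (use el len iS True in \<open>auto simp: d_def\<close>)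
          have "cnt T' (s+1) (s + ?l + 2) \<le> cnt T' (s+1) (s+1+d) + cnt T' (s+1+d) (s + ?l + 2)" by (rule cnt_split)
          then show ?thesis using cnt_good[OF g1] cnt_good[OF g2] by simp
        next
          case False
          have "good T' (s+1) (s + ?l + 2)"
          proof (cases "i \<le> q")
            case True
            show ?thesis
            proof (rule goodI[where q="q+1"])
              fix t assume t: "s + 1 + t + 1 < s + ?l + 2"
              have "T'!(Suc (q+t)) = T!(q+t)" using True by (intro hT2) linarith
              also have "\<dots> = T!(s+t)" using t q by (intro cp) (linarith, linarith, simp add: p1)
              also have "\<dots> = T'!(Suc (s+t))" using iS by (intro hT2[symmetric]) linarith
              finally show "T'!(q+1+t) = T'!(s+1+t)" by simp
            qed (use el len q in auto)
          next
            case qi: False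
            show ?thesis
            proof (rule goodI[where q=q])
              fix t assume t: "s + 1 + t + 1 < s + ?l + 2"
              have "T'!(q+t) = T!(q+t)" using t qi False by (intro hT1) linarith
              also have "\<dots> = T!(s+t)" using t q by (intro cp) (linarith, linarith, simp add: p1)
              also have "\<dots> = T'!(Suc (s+t))" using iS by (intro hT2[symmetric]) linarith
              finally show "T'!(q+t) = T'!(s+1+t)" by simp
            qed (use el len q in auto)
          qed
          then show ?thesis using cnt_good by fastforce
        qed
        then show ?thesis using gs ge NP by simp
      qed
    qed
  qed
qed



theorem thm_ins:
  assumes ne: "T \<noteq> []" and TT: "T = u @ v" "T' = u @ b # v"
  shows "z77sr T' \<le> 2 * z77sr T"
proof -
  let ?i = "length u"
  have len: "length T' = length T + 1" using TT by simp
  have hT1: "T'!x = T!x" if "x < ?i" for x using TT that by (simp add: nth_append)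
  have hT2: "T'!(Suc x) = T!x" if "?i \<le> x" for x
  proof -
    have "Suc x - ?i = Suc (x - ?i)" using that by linarith
    then show ?thesis using TT that by (simp add: nth_append)
  qed
  show ?thesis
  proof (rule assemble[where f="\<lambda>x. if x < ?i then x else Suc x" and P="\<lambda>j. st T j < ?i \<and> ?i \<le> st T (Suc j)"])
    show "length T' \<le> (if st T (z77sr T) < ?i then st T (z77sr T) else Suc (st T (z77sr T)))"
      using st_z[of T] len TT by auto
  next
    fix j assume j: "j < z77sr T"
    show "cnt T' (if st T j < ?i then st T j else Suc (st T j)) (if st T (Suc j) < ?i then st T (Suc j) else Suc (st T (Suc j)))
       \<le> (if st T j < ?i \<and> ?i \<le> st T (Suc j) then 3 else 2)"
      using phrase_ins[where i="length u", OF len hT1 hT2 st_lt[OF j]] by (simp only: st_Suc)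
  next
    show "cnt T' (if st T 0 < ?i then st T 0 else Suc (st T 0)) (if st T 1 < ?i then st T 1 else Suc (st T 1))
       \<le> (if st T 0 < ?i \<and> ?i \<le> st T (Suc 0) then 2 else 1)"
      using cnt_le[of T' "(if 0 < ?i then 0 else Suc 0)" "(if 1 < ?i then 1 else Suc 1)"]
      by (cases "?i = 0"; cases "?i = 1") (auto simp: st01 st_Suc0)
  next
    show "cnt T' 0 (if 0 < ?i then 0 else Suc 0) \<le> (if \<exists>j<z77sr T. st T j < ?i \<and> ?i \<le> st T (Suc j) then 0 else 1)"
      using cnt_le[of T' 0 "Suc 0"] by (cases "?i = 0") (auto simp: cnt_def)
  qed (rule ne, rule uniq_lt)
qed



lemma phrase_del:
  assumes len: "length T' + 1 = length T"
    and hT1: "\<And>x. x < i \<Longrightarrow> T'!x = T!x" and hT2: "\<And>x. i \<le> x \<Longrightarrow> T'!x = T!(Suc x)"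
    and s: "s < length T" and ilt: "i < length T"
  shows "cnt T' (if s \<le> i then s else s - 1) (if nxt T s \<le> i then nxt T s else nxt T s - 1)
          \<le> (if s \<le> i \<and> i < nxt T s then 3 else 2)"
proof -
  let ?l = "lz_len T s"
  have e: "nxt T s = s + ?l + 1" by (simp add: nxt_def)
  have el: "s + ?l + 1 \<le> length T + 1" using lz_len_le[of T s] s by linarith
  show ?thesis
  proof (cases "?l = 0")
    case True
    show ?thesis
      using cnt_le[of T' "(if s \<le> i then s else s - 1)" "(if nxt T s \<le> i then nxt T s else nxt T s - 1)"]
        e True by (auto split: if_splits)
  next
    case False
    then obtain q where q: "q < s"
      and cp: "\<And>a b. q \<le> a \<Longrightarrow> a < q + ?l \<Longrightarrow> b = a + (s - q) \<Longrightarrow> T!a = T!b"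
      using copy_form[of T s] by blast
    have lpos: "0 < ?l" using False by simp
    define p where "p = s - q"
    have p1: "1 \<le> p" "s = q + p" using q unfolding p_def by linarith+
    show ?thesis
    proof (cases "s \<le> i \<and> i < nxt T s")
      case P: True
      then have gs: "(if s \<le> i then s else s - 1) = s"
        and ge: "(if nxt T s \<le> i then nxt T s else nxt T s - 1) = s + ?l" using e by auto
      show ?thesis
      proof (cases "i = s + ?l")
        case True
        have "good T' s (s + ?l)"
        proof (rule goodI[where q=q])
          fix t assume t: "s + t + 1 < s + ?l"
          have "T'!(q+t) = T!(q+t)" using t True q by (intro hT1) linarith
          also have "\<dots> = T!(s+t)" using t q by (intro cp) (linarith, linarith, simp add: p1)
          also have "\<dots> = T'!(s+t)" using t True by (intro hT1[symmetric]) linarith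
          finally show "T'!(q+t) = T'!(s+t)" .
        qed (use el len q in auto)
        then have "cnt T' s (s + ?l) \<le> 1" by (rule cnt_good)
        then show ?thesis using gs ge P by simp
      next
        case False
        then have il: "i < s + ?l" using P e by linarith
        define m where "m = min (i + p) (s + ?l)"
        have g1: "good T' s (i+1)"
        proof (rule goodI[where q=q])
          fix t assume t: "s + t + 1 < i + 1"
          have "T'!(q+t) = T!(q+t)" using t P q by (intro hT1) linarith
          also have "\<dots> = T!(s+t)" using t il q by (intro cp) (linarith, linarith, simp add: p1)
          also have "\<dots> = T'!(s+t)" using t by (intro hT1[symmetric]) linarith
          finally show "T'!(q+t) = T'!(s+t)" .
        qed (use el len il q P in auto)
        have g2: "good T' (i+1) m"
        proof (cases "m \<le> i + 2")
          case True then show ?thesis using el len il unfolding good_def m_def by auto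
        next
          case False
          then have p3: "3 \<le> p" unfolding m_def by linarith
          show ?thesis
          proof (rule goodI[where q="i+2-p"])
            fix t assume t: "i + 1 + t + 1 < m"
            have "T'!(i+2-p+t) = T!(i+2-p+t)" using t p1 p3 P unfolding m_def by (intro hT1) linarith
            also have "\<dots> = T!(Suc (i+1+t))" using t p1 p3 P unfolding m_def by (intro cp) linarith+
            also have "\<dots> = T'!(i+1+t)" by (intro hT2[symmetric]) linarith
            finally show "T'!(i+2-p+t) = T'!(i+1+t)" .
          qed (use el len p3 P il in \<open>auto simp: m_def\<close>)
        qed
        have g3: "good T' m (s + ?l)"
        proof (cases "s + ?l \<le> i + p")
          case True then show ?thesis using el len unfolding good_def m_def by auto
        next
          case False
          then have m: "m = i + p" unfolding m_def by simp
          show ?thesis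
          proof (rule goodI[where q="i"])
            fix t assume t: "m + t + 1 < s + ?l"
            have "T'!(i+t) = T!(Suc (i+t))" by (intro hT2) linarith
            also have "\<dots> = T!(Suc (i+p+t))" using t p1 P m by (intro cp) linarith+
            also have "\<dots> = T'!(i+p+t)" by (intro hT2[symmetric]) linarith
            finally show "T'!(i+t) = T'!(m+t)" using m by simp
          qed (use el len p1 m in auto)
        qed
        have "cnt T' s (s + ?l) \<le> cnt T' s (i+1) + cnt T' (i+1) m + cnt T' m (s + ?l)" by (rule cnt3)
        then show ?thesis using cnt_good[OF g1] cnt_good[OF g2] cnt_good[OF g3] gs ge P by simp
      qed
    next
      case NP: False
      show ?thesis
      proof (cases "nxt T s \<le> i")
        case True
        then have gs: "(if s \<le> i then s else s - 1) = s"
          and ge: "(if nxt T s \<le> i then nxt T s else nxt T s - 1) = s + ?l + 1" using e by auto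
        have "good T' s (s + ?l + 1)"
        proof (rule goodI[where q=q])
          fix t assume t: "s + t + 1 < s + ?l + 1"
          have "T'!(q+t) = T!(q+t)" using t True q e by (intro hT1) linarith
          also have "\<dots> = T!(s+t)" using t q by (intro cp) (linarith, linarith, simp add: p1)
          also have "\<dots> = T'!(s+t)" using t True e by (intro hT1[symmetric]) linarith
          finally show "T'!(q+t) = T'!(s+t)" .
        qed (use el len q True e s ilt in auto)
        then have "cnt T' s (s + ?l + 1) \<le> 1" by (rule cnt_good)
        then show ?thesis using gs ge NP by simp
      next
        case False
        then have iS: "i < s" using NP by linarith
        then have gs: "(if s \<le> i then s else s - 1) = s - 1"
          and ge: "(if nxt T s \<le> i then nxt T s else nxt T s - 1) = s + ?l" using e by auto
        have "cnt T' (s-1) (s + ?l) \<le> 2"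
        proof (cases "q \<le> i \<and> i < q + ?l")
          case True
          define d where "d = i - q"
          have g1: "good T' (s-1) (s+d)"
          proof (cases "d = 0")
            case True then show ?thesis using el len iS unfolding good_def by auto
          next
            case d0: False
            show ?thesis
            proof (rule goodI[where q=q])
              fix t assume t: "s - 1 + t + 1 < s + d"
              have "T'!(q+t) = T!(q+t)" using t True unfolding d_def by (intro hT1) linarith
              also have "\<dots> = T!(Suc (s-1+t))" using t True q iS unfolding d_def by (intro cp) linarith+
              also have "\<dots> = T'!(s-1+t)" using iS by (intro hT2[symmetric]) linarith
              finally show "T'!(q+t) = T'!(s-1+t)" .
            qed (use el len q True iS d0 in \<open>auto simp: d_def\<close>)
          qed
          have g2: "good T' (s+d) (s + ?l)"
          proof (rule goodI[where q="i"])
            fix t assume t: "s + d + t + 1 < s + ?l"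
            have "T'!(i+t) = T!(Suc (i+t))" by (intro hT2) linarith
            also have "\<dots> = T!(Suc (s+d+t))" using t True p1 unfolding d_def by (intro cp) linarith+
            also have "\<dots> = T'!(s+d+t)" using iS by (intro hT2[symmetric]) linarith
            finally show "T'!(i+t) = T'!(s+d+t)" .
          qed (use el len iS True in \<open>auto simp: d_def\<close>)
          have "cnt T' (s-1) (s + ?l) \<le> cnt T' (s-1) (s+d) + cnt T' (s+d) (s + ?l)" by (rule cnt_split)
          then show ?thesis using cnt_good[OF g1] cnt_good[OF g2] by simp
        next
          case False
          have "good T' (s-1) (s + ?l)"
          proof (cases "i < q")
            case True
            show ?thesis
            proof (rule goodI[where q="q-1"])
              fix t assume t: "s - 1 + t + 1 < s + ?l"
              have "T'!(q-1+t) = T!(Suc (q-1+t))" using True by (intro hT2) linarith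
              also have "\<dots> = T!(Suc (s-1+t))" using t q True by (intro cp) linarith+
              also have "\<dots> = T'!(s-1+t)" using iS by (intro hT2[symmetric]) linarith
              finally show "T'!(q-1+t) = T'!(s-1+t)" .
            qed (use el len q True in auto)
          next
            case qi: False
            then have ql: "q + ?l \<le> i" using False by linarith
            show ?thesis
            proof (rule goodI[where q=q])
              fix t assume t: "s - 1 + t + 1 < s + ?l"
              have "T'!(q+t) = T!(q+t)" using t ql iS by (intro hT1) linarith
              also have "\<dots> = T!(Suc (s-1+t))" using t q iS by (intro cp) linarith+
              also have "\<dots> = T'!(s-1+t)" using iS by (intro hT2[symmetric]) linarith
              finally show "T'!(q+t) = T'!(s-1+t)" .
            qed (use el len q ql iS lpos in auto)
          qed
          then show ?thesis using cnt_good by fastforce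
        qed
        then show ?thesis using gs ge NP by simp
      qed
    qed
  qed
qed

theorem thm_del:
  assumes ne: "T \<noteq> []" and TT: "T = u @ a # v" "T' = u @ v"
  shows "z77sr T' \<le> 2 * z77sr T"
proof -
  let ?i = "length u"
  have len: "length T' + 1 = length T" using TT by simp
  have ilt: "length u < length T" using TT by simp
  have hT1: "T'!x = T!x" if "x < ?i" for x using TT that by (simp add: nth_append)
  have hT2: "T'!x = T!(Suc x)" if "?i \<le> x" for x
  proof -
    have "Suc x - ?i = Suc (x - ?i)" using that by linarith
    then show ?thesis using TT that by (simp add: nth_append)
  qed
  show ?thesis
  proof (rule assemble[where f="\<lambda>x. if x \<le> ?i then x else x - 1" and P="\<lambda>j. st T j \<le> ?i \<and> ?i < st T (Suc j)"])
    show "length T' \<le> (if st T (z77sr T) \<le> ?i then st T (z77sr T) else st T (z77sr T) - 1)"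
      using st_z[of T] len TT by auto
  next
    fix j assume j: "j < z77sr T"
    show "cnt T' (if st T j \<le> ?i then st T j else st T j - 1) (if st T (Suc j) \<le> ?i then st T (Suc j) else st T (Suc j) - 1)
       \<le> (if st T j \<le> ?i \<and> ?i < st T (Suc j) then 3 else 2)"
      using phrase_del[where i="length u", OF len hT1 hT2 st_lt[OF j] ilt] by (simp only: st_Suc)
  next
    show "cnt T' (if st T 0 \<le> ?i then st T 0 else st T 0 - 1) (if st T 1 \<le> ?i then st T 1 else st T 1 - 1)
       \<le> (if st T 0 \<le> ?i \<and> ?i < st T (Suc 0) then 2 else 1)"
      using cnt_le[of T' 0 "(if 1 \<le> ?i then 1 else 0)"]
      by (cases "?i = 0") (auto simp: st01 st_Suc0 cnt_def)
  next
    show "cnt T' 0 (if 0 \<le> ?i then 0 else 0 - 1) \<le> (if \<exists>j<z77sr T. st T j \<le> ?i \<and> ?i < st T (Suc j) then 0 else 1)"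
      by (simp add: cnt_def)
  qed (rule ne, rule uniq_le)
qed


theorem mainTheorem11:
  fixes T T' :: "'a list"
  assumes "T \<noteq> []"
  shows "(length T' = length T \<and> ed T T' = 1 \<longrightarrow> z77sr T' \<le> 2 * z77sr T)
       \<and> (length T' = length T + 1 \<and> ed T T' = 1 \<longrightarrow> z77sr T' \<le> 2 * z77sr T)
       \<and> (length T' + 1 = length T \<and> ed T T' = 1 \<longrightarrow> z77sr T' \<le> 2 * z77sr T)"
proof (intro conjI impI)
  assume "length T' = length T \<and> ed T T' = 1"
  then obtain u v a b where "T = u @ a # v" "T' = u @ b # v" using ed_sub[of T' T] by blast
  then show "z77sr T' \<le> 2 * z77sr T" by (rule thm_sub[OF assms])
next
  assume "length T' = length T + 1 \<and> ed T T' = 1"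
  then obtain u v b where "T = u @ v" "T' = u @ b # v" using ed_ins[of T' T] by blast
  then show "z77sr T' \<le> 2 * z77sr T" by (rule thm_ins[OF assms])
next
  assume "length T' + 1 = length T \<and> ed T T' = 1"
  then obtain u v a where "T = u @ a # v" "T' = u @ v" using ed_del[of T' T] by blast
  then show "z77sr T' \<le> 2 * z77sr T" by (rule thm_del[OF assms])
qed

end
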